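(* For all $n,m,k\in\mathbb{N}$, \[ \sum_{i=0}^{k}\frac{1}{\binom{n}{i}}=\frac{2^{m}(n+1)}{n+m+1}\sum_{i=0}^{k}\frac{1}{\binom{n+m}{i}}+\sum_{j=1}^{m}\frac{2^{j-1}(n+1)}{n+j+1}\left(\frac{1}{\binom{n+j}{k+1}}-1\right), \] where $k\le n$ so that all binomial coefficients in denominators are nonzero.
   Context: Empty sums are $0$. *)

theory Defs
  imports Complex_Main
begin

end

theory Submission
  imports Defs
begin

lemma r_alg: fixes x y z a b :: real
  assumes "x > 0" "y > 0" "z > 0" "a > 0" "b \<ge> 0" "b \<le> a - 1" "(a - b) * y = a * x" "(b+1) * z = a * x"
  shows "1 / x = (a / (a+1)) * (1/y + 1/z)"
proof -
  have y: "1/y = (a-b)/(a*x)" using assms by (simp add: divide_simps)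
  have z: "1/z = (b+1)/(a*x)" using assms by (simp add: divide_simps)
  show ?thesis unfolding y z using assms by (simp add: divide_simps)
qed

lemma recip_step:
  fixes n i :: nat
  assumes "i \<le> n"
  shows "1 / real (n choose i) = (real (n+1) / real (n+2)) * (1 / real ((n+1) choose i) + 1 / real ((n+1) choose (i+1)))"
proof -
  have a: "real (Suc n - i) * real (Suc n choose i) = real (Suc n) * real (n choose i)"
    using binomial_absorb_comp[of "Suc n" i] by (metis diff_Suc_1 of_nat_mult)
  have b0: "real (Suc i) * real (Suc n choose Suc i) = real (Suc n) * real (n choose i)"
    using Suc_times_binomial[of i n] by (metis of_nat_mult)
  have b: "(real i + 1) * real (Suc n choose Suc i) = real (Suc n) * real (n choose i)"
    using b0 by (simp only: of_nat_Suc add.commute)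
  have p0: "real (n choose i) > 0" using assms by simp
  have p1: "real (Suc n choose i) > 0" using assms by simp
  have p2: "real (Suc n choose Suc i) > 0" using assms by (simp del: binomial_Suc_Suc)
  have si: "real (Suc n - i) = real (Suc n) - real i" using assms by (simp add: of_nat_diff)
  have "1 / real (n choose i) = (real (Suc n) / (real (Suc n)+1)) * (1 / real (Suc n choose i) + 1 / real (Suc n choose Suc i))"
    apply (rule r_alg[where b="real i"])
    using p0 p1 p2 assms a b si by (simp_all del: binomial_Suc_Suc)
  then show ?thesis by simp
qed

lemma sum_step:
  fixes n k :: nat
  assumes "k \<le> n"
  shows "(\<Sum>i=0..k. 1 / real (n choose i)) = (2 * real (n+1) / real (n+2)) * (\<Sum>i=0..k. 1 / real ((n+1) choose i))
     + (real (n+1) / real (n+2)) * (1 / real ((n+1) choose (k+1)) - 1)"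
  using assms
proof (induction k)
  case 0
  have g: "2 * a / (a+1) + a / (a+1) * (1/a - 1) = 1" if "a > 0" for a::real
    using that by (simp add: divide_simps)
  have "(2 * real (n+1) / real (n+2)) + (real (n+1) / real (n+2)) * (1 / real (n+1) - 1) = 1"
    using g[of "real (n+1)"] by simp
  then show ?case by simp
next
  case (Suc k)
  have IH: "(\<Sum>i=0..k. 1 / real (n choose i)) = (2 * real (n+1) / real (n+2)) * (\<Sum>i=0..k. 1 / real ((n+1) choose i))
     + (real (n+1) / real (n+2)) * (1 / real ((n+1) choose (k+1)) - 1)" using Suc by simp
  have r: "1 / real (n choose (k+1)) = (real (n+1) / real (n+2)) * (1 / real ((n+1) choose (k+1)) + 1 / real ((n+1) choose (k+1+1)))"
    using recip_step[of "k+1" n] Suc.prems by simp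
  have L: "\<And>S0 S1 c u v w::real. S0 = 2*c*S1 + c*(u - 1) \<Longrightarrow> w = c*(u+v) \<Longrightarrow> S0 + w = 2*c*(S1+u) + c*(v-1)"
    by (simp add: algebra_simps)
  have "(\<Sum>i=0..k. 1 / real (n choose i)) + 1 / real (n choose (k+1)) = (2 * (real (n+1) / real (n+2))) * ((\<Sum>i=0..k. 1 / real ((n+1) choose i)) + 1 / real ((n+1) choose (k+1)))
     + (real (n+1) / real (n+2)) * (1 / real ((n+1) choose (k+1+1)) - 1)"
    apply (rule L) using IH r by (simp_all only: times_divide_eq_right mult.assoc)
  then show ?case unfolding sum.atLeast0_atMost_Suc by (simp only: Suc_eq_plus1 times_divide_eq_right mult.assoc)
qed

theorem mainTheorem17:
  fixes n m k :: nat
  assumes "k \<le> n"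
  shows "(\<Sum>i=0..k. 1 / real (n choose i)) =
    (2 ^ m * real (n + 1) / real (n + m + 1)) * (\<Sum>i=0..k. 1 / real ((n + m) choose i))
    + (\<Sum>j=1..m. (2 ^ (j - 1) * real (n + 1) / real (n + j + 1)) * (1 / real ((n + j) choose (k + 1)) - 1))"
proof (induction m)
  case 0
  then show ?case by simp
next
  case (Suc m)
  have s: "(\<Sum>i=0..k. 1 / real ((n+m) choose i)) = (2 * real (n+m+1) / real (n+m+2)) * (\<Sum>i=0..k. 1 / real ((n+m+1) choose i))
     + (real (n+m+1) / real (n+m+2)) * (1 / real ((n+m+1) choose (k+1)) - 1)"
    using sum_step[of k "n+m"] assms by simp
  have hh: "real n + real m + 1 \<noteq> 0" "real n + real m + 2 \<noteq> 0" by linarith+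
  have gq: "\<And>a c::real. a > 0 \<Longrightarrow> c / a * (2 * a / (a+1)) = 2 * c / (a+1)" by (simp add: field_simps)
  have gq2: "\<And>a c::real. a > 0 \<Longrightarrow> c / a * (a / (a+1)) = c / (a+1)" by (simp add: field_simps)
  define A where "A = 2 ^ m * real (n + 1) / real (n + m + 1)"
  define S' where "S' = (\<Sum>i=0..k. 1 / real ((n+m+1) choose i))"
  define D where "D = 1 / real ((n+m+1) choose (k+1)) - 1"
  have q1: "A * (2 * real (n+m+1) / real (n+m+2)) = 2 ^ Suc m * real (n + 1) / real (n + Suc m + 1)"
    unfolding A_def using gq[of "real (n+m+1)" "2 ^ m * real (n + 1)"] by (simp add: mult_ac)
  have q2: "A * (real (n+m+1) / real (n+m+2)) = 2 ^ (Suc m - 1) * real (n + 1) / real (n + Suc m + 1)"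
    unfolding A_def using gq2[of "real (n+m+1)" "2 ^ m * real (n + 1)"] by (simp add: mult_ac)
  have sp: "(\<Sum>j=1..Suc m. (2 ^ (j - 1) * real (n + 1) / real (n + j + 1)) * (1 / real ((n + j) choose (k + 1)) - 1))
     = (\<Sum>j=1..m. (2 ^ (j - 1) * real (n + 1) / real (n + j + 1)) * (1 / real ((n + j) choose (k + 1)) - 1))
       + (2 ^ (Suc m - 1) * real (n + 1) / real (n + Suc m + 1)) * D"
    unfolding D_def by simp
  have "(\<Sum>i=0..k. 1 / real (n choose i)) = A * ((2 * real (n+m+1) / real (n+m+2)) * S' + (real (n+m+1) / real (n+m+2)) * D)
     + (\<Sum>j=1..m. (2 ^ (j - 1) * real (n + 1) / real (n + j + 1)) * (1 / real ((n + j) choose (k + 1)) - 1))"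
    using Suc.IH s unfolding A_def S'_def D_def by simp
  also have "\<dots> = (A * (2 * real (n+m+1) / real (n+m+2))) * S' + (A * (real (n+m+1) / real (n+m+2))) * D
     + (\<Sum>j=1..m. (2 ^ (j - 1) * real (n + 1) / real (n + j + 1)) * (1 / real ((n + j) choose (k + 1)) - 1))"
    by (simp add: algebra_simps)
  finally show ?case unfolding q1 q2 sp S'_def by simp
qed

end
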